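(* Fix an sBS $k$ and suppose that in slots $0,1,\dots,t-1$ each file is recommended independently with probability $q=r/F$ and cached independently with probability $p=c/F$, and that $\hat{\mathbf P}_k^{(t)}$ is the point estimate. Let $(\mathbf u^*_{o,t},\mathbf v^*_{o,t})\in\arg\max_{(\mathbf u,\mathbf v)\in\mathcal C_{c,r}}\mathbf u^T\hat{\mathbf P}_k^{(t)}\mathbf v$. Then for any $\epsilon>0$ and $\delta>0$, with probability at least $1-\delta$, $$(\mathbf u^*_{o,t})^T\mathbf P_k\mathbf v^*_{o,t}\ge\sup_{(\mathbf u,\mathbf v)\in\mathcal C_{c,r}}\mathbf u^T\mathbf P_k\mathbf v-\epsilon,$$ provided $$t\ge\frac{1}{q\left(1-\exp\{-\frac{N\epsilon^2}{8\kappa^2F^2c^2r^2}\}\right)}\log\frac{2|\mathcal N_\epsilon|F^2}{\delta}.$$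
   Context: Setting: a catalog of $F$ files $\{1,\dots,F\}$; time is slotted; in every slot each of $N$ users of a small base station (sBS) requests a file. For sBS $k$, the probability transition matrix (PTM) $\mathbf P_k\in[0,1]^{F\times F}$ has entries $(\mathbf P_k)_{ij}=p_{ij,k}$, the probability that a user at sBS $k$ requests file $i$ given that file $j$ is recommended; $\mathbf P_k$ does not change over time. For a cache size $c>0$ and a recommendation budget $r>0$, the strategy set is $\mathcal C_{c,r}=\{(\mathbf u,\mathbf v)\in[0,1]^F\times[0,1]^F:\mathbf u^T\mathbf 1\le c,\ \mathbf v^T\mathbf 1\le r\}$; the average cache hit of $(\mathbf u,\mathbf v)$ at sBS $k$ is $\mathbf u^T\mathbf P_k\mathbf v$. $d_{ik}^{(s)}$ is the number of requests for file $i$ at sBS $k$ in slot $s$, and $v_{jk}^{s}\in\{0,1\}$ indicates whether file $j$ was recommended at sBS $k$ in slot $s$. Statistical assumption: conditionally on the recommendation indicators, for each slot $s$ with $v_{jk}^{s-1}=1$, $d_{ik}^{(s)}$ is a sum of $N$ i.i.d. Bernoulli$(p_{ij,k})$ variables, independent across such slots. Point estimator: $\hat p_{ij,k}^{(t)}=\frac{\sum_{s=0}^{t-1}d_{ik}^{(s)}v_{jk}^{s-1}}{N\sum_{s=0}^{t-1}v_{jk}^{s-1}}$, and $\hat{\mathbf P}_k^{(t)}$ is the matrix of these entries. An $\epsilon$-cover of $\mathcal C_{c,r}$ is a finite set $\mathcal N_\epsilon$ of pairs $(\mathbf x,\mathbf y)$ such that for every $(\mathbf u,\mathbf v)\in\mathcal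 C_{c,r}$ some $(\mathbf x,\mathbf y)\in\mathcal N_\epsilon$ satisfies $\|\mathbf u-\mathbf x\|_2\le\epsilon/8$ and $\|\mathbf v-\mathbf y\|_2\le\epsilon/8$; $|\mathcal N_\epsilon|$ is its cardinality. $\kappa>0$ is a fixed constant such that $|\mathbf x^T A\mathbf y|\le\kappa\|\mathbf x\|_1\|\mathbf y\|_1\|A\|_F$ for all vectors $\mathbf x,\mathbf y$ and matrices $A$. *)

theory Defs
  imports "HOL-Probability.Probability"
begin

text \<open>Files are indexed by 1..F; vectors are functions nat => real (only the
values on 1..F matter); a PTM is a function nat => nat => real with
P i j = probability of requesting file i given file j is recommended.\<close>

definition bilin :: "nat \<Rightarrow> (nat \<Rightarrow> real) \<Rightarrow> (nat \<Rightarrow> nat \<Rightarrow> real) \<Rightarrow> (nat \<Rightarrow> real) \<Rightarrow> real" where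
  "bilin F u A v = (\<Sum>i\<in>{1..F}. \<Sum>j\<in>{1..F}. u i * A i j * v j)"

definition strat_set :: "nat \<Rightarrow> real \<Rightarrow> real \<Rightarrow> ((nat \<Rightarrow> real) \<times> (nat \<Rightarrow> real)) set" where
  "strat_set F c r = {(u, v). (\<forall>i\<in>{1..F}. 0 \<le> u i \<and> u i \<le> 1) \<and> (\<forall>i\<in>{1..F}. 0 \<le> v i \<and> v i \<le> 1)
      \<and> (\<Sum>i\<in>{1..F}. u i) \<le> c \<and> (\<Sum>i\<in>{1..F}. v i) \<le> r}"

definition l2dist :: "nat \<Rightarrow> (nat \<Rightarrow> real) \<Rightarrow> (nat \<Rightarrow> real) \<Rightarrow> real" where
  "l2dist F x y = sqrt (\<Sum>i\<in>{1..F}. (x i - y i)\<^sup>2)"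

definition l1norm :: "nat \<Rightarrow> (nat \<Rightarrow> real) \<Rightarrow> real" where
  "l1norm F x = (\<Sum>i\<in>{1..F}. \<bar>x i\<bar>)"

definition frob :: "nat \<Rightarrow> (nat \<Rightarrow> nat \<Rightarrow> real) \<Rightarrow> real" where
  "frob F A = sqrt (\<Sum>i\<in>{1..F}. \<Sum>j\<in>{1..F}. (A i j)\<^sup>2)"

definition is_cover :: "nat \<Rightarrow> real \<Rightarrow> real \<Rightarrow> real \<Rightarrow> ((nat \<Rightarrow> real) \<times> (nat \<Rightarrow> real)) set \<Rightarrow> bool" where
  "is_cover F c r eps Ncov \<longleftrightarrow> finite Ncov \<and>
     (\<forall>(u, v)\<in>strat_set F c r. \<exists>(x, y)\<in>Ncov. l2dist F u x \<le> eps / 8 \<and> l2dist F v y \<le> eps / 8)"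

text \<open>Point estimator. rec j s w = the indicator v_j^{s-1} (recommendation in force
for slot s), d i s w = number of requests of file i in slot s.  With no
recommendation of j the quotient is 0/0 = 0 in Isabelle.\<close>
definition phat :: "nat \<Rightarrow> nat \<Rightarrow> (nat \<Rightarrow> nat \<Rightarrow> 'w \<Rightarrow> nat) \<Rightarrow> (nat \<Rightarrow> nat \<Rightarrow> 'w \<Rightarrow> bool) \<Rightarrow> 'w \<Rightarrow> nat \<Rightarrow> nat \<Rightarrow> real" where
  "phat N t d rec w i j =
     (\<Sum>s<t. real (d i s w) * of_bool (rec j s w)) / (real N * (\<Sum>s<t. of_bool (rec j s w)))"

end

theory Submission
  imports Defs
begin

lemma meas_pair_fun:
  fixes G :: "nat \<Rightarrow> nat \<Rightarrow> 'b::topological_space"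
  assumes "a \<in> K" "b \<in> K"
  shows "(\<lambda>h. G (h a) (h b)) \<in> measurable (PiM K (\<lambda>_. count_space (UNIV::nat set))) (borel::'b::topological_space measure)"
proof -
  have "(\<lambda>h. (h a, h b)) \<in> measurable (PiM K (\<lambda>_. count_space (UNIV::nat set))) (count_space UNIV \<Otimes>\<^sub>M count_space UNIV)"
    using assms by (intro measurable_Pair) (auto intro!: measurable_component_singleton)
  also have "count_space UNIV \<Otimes>\<^sub>M count_space UNIV = count_space (UNIV::(nat\<times>nat) set)"
    by (simp add: pair_measure_countable)
  finally have m: "(\<lambda>h. (h a, h b)) \<in> measurable (PiM K (\<lambda>_. count_space (UNIV::nat set))) (count_space UNIV)" .
  have "(\<lambda>p. G (fst p) (snd p)) \<in> measurable (count_space UNIV) (borel::'b measure)" by simp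
  from measurable_compose[OF m this] show ?thesis by simp
qed

lemma (in prob_space) slot_bound:
  fixes Bv :: "nat \<Rightarrow> 'a \<Rightarrow> bool" and Y :: "nat \<Rightarrow> 'a \<Rightarrow> nat" and f :: "nat \<Rightarrow> real"
  assumes T: "finite T"
    and Bm: "\<And>s. Bv s \<in> measurable M (count_space UNIV)"
    and Ym: "\<And>s. Y s \<in> measurable M (count_space UNIV)"
    and indep: "indep_vars (\<lambda>_. count_space UNIV)
        (\<lambda>z. case z of Inl s \<Rightarrow> (\<lambda>w. of_bool (Bv s w) :: nat) | Inr s \<Rightarrow> Y s) (Inl ` T \<union> Inr ` T)"
    and Bd: "\<And>s. s \<in> T \<Longrightarrow> distr M (count_space UNIV) (Bv s) = measure_pmf (bernoulli_pmf q)"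
    and Yd: "\<And>s. s \<in> T \<Longrightarrow> (\<integral>\<^sup>+w. ennreal (exp (f (Y s w))) \<partial>M) \<le> ennreal m"
    and q: "0 \<le> q" "q \<le> 1" and m: "0 \<le> m"
  shows "measure M {w \<in> space M. 0 \<le> (\<Sum>s\<in>T. of_bool (Bv s w) * f (Y s w))} \<le> (1 - q + q * m) ^ card T"
proof -
  define Z where "Z = (\<lambda>z. case z of Inl s \<Rightarrow> (\<lambda>w. of_bool (Bv s w) :: nat) | Inr s \<Rightarrow> Y s)"
  have fY[measurable]: "(\<lambda>w. g (Y s w)) \<in> borel_measurable M" for s and g :: "nat \<Rightarrow> real"
    by (rule measurable_compose[OF Ym]) simp
  have fYe[measurable]: "(\<lambda>w. g (Y s w)) \<in> borel_measurable M" for s and g :: "nat \<Rightarrow> ennreal"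
    by (rule measurable_compose[OF Ym]) simp
  have Bp[measurable]: "Measurable.pred M (Bv s)" for s
    using Bm by (simp add: pred_def)
  have sm[measurable]: "(\<lambda>w. \<Sum>s\<in>T. of_bool (Bv s w) * f (Y s w)) \<in> borel_measurable M"
    by measurable
  have "emeasure M {w \<in> space M. 0 \<le> (\<Sum>s\<in>T. of_bool (Bv s w) * f (Y s w))}
      \<le> ennreal (exp (-1 * 0)) * (\<integral>\<^sup>+w. ennreal (exp (1 * (\<Sum>s\<in>T. of_bool (Bv s w) * f (Y s w)))) * indicator (space M) w \<partial>M)"
    by (rule Chernoff_ineq_nn_integral_ge) auto
  also have "\<dots> = (\<integral>\<^sup>+w. ennreal (exp (\<Sum>s\<in>T. of_bool (Bv s w) * f (Y s w))) * indicator (space M) w \<partial>M)"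
    by simp
  also have "\<dots> = (\<integral>\<^sup>+w. (\<Prod>s\<in>T. ennreal (exp (of_bool (Bv s w) * f (Y s w)))) \<partial>M)"
    by (intro nn_integral_cong, unfold exp_sum[OF T], subst prod_ennreal) auto
  also have "\<dots> = (\<Prod>s\<in>T. \<integral>\<^sup>+w. ennreal (exp (of_bool (Bv s w) * f (Y s w))) \<partial>M)"
  proof (rule indep_vars_nn_integral[OF T])
    have 1: "indep_vars (\<lambda>s. PiM {Inl s, Inr s} (\<lambda>_. count_space UNIV)) (\<lambda>s \<omega>. restrict (\<lambda>z. Z z \<omega>) {Inl s, Inr s}) T"
      using indep_vars_restrict[OF indep[folded Z_def], of T "\<lambda>s. {Inl s, Inr s}"] by (auto simp: disjoint_family_on_def)
    have 2: "indep_vars (\<lambda>_. borel) (\<lambda>s \<omega>. (\<lambda>h. ennreal (exp (real (h (Inl s)) * f (h (Inr s))))) (restrict (\<lambda>z. Z z \<omega>) {Inl s, Inr s})) T"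
      by (rule indep_vars_compose2[OF 1]) (rule meas_pair_fun, auto)
    have 3: "indep_vars (\<lambda>_. borel) (\<lambda>s \<omega>. (\<lambda>h. ennreal (exp (real (h (Inl s)) * f (h (Inr s))))) (restrict (\<lambda>z. Z z \<omega>) {Inl s, Inr s})) T
       \<longleftrightarrow> indep_vars (\<lambda>_. borel) (\<lambda>s w. ennreal (exp (of_bool (Bv s w) * f (Y s w)))) T"
      by (intro indep_vars_cong) (auto simp: Z_def fun_eq_iff)
    show "indep_vars (\<lambda>_. borel) (\<lambda>s w. ennreal (exp (of_bool (Bv s w) * f (Y s w)))) T"
      using 2 3 by simp
  qed simp
  also have "\<dots> \<le> (\<Prod>s\<in>T. ennreal (1 - q + q * m))"
  proof (rule prod_mono_ennreal)
    fix s assume s: "s \<in> T"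
    have B1: "(\<integral>\<^sup>+ w. g (Bv s w) \<partial>M) = g True * ennreal q + g False * ennreal (1 - q)" for g :: "bool \<Rightarrow> ennreal"
    proof -
      have "(\<integral>\<^sup>+ w. g (Bv s w) \<partial>M) = (\<integral>\<^sup>+ b. g b \<partial>distr M (count_space UNIV) (Bv s))"
        by (rule nn_integral_distr[symmetric]) (use Bm in auto)
      also have "\<dots> = (\<integral>\<^sup>+ b. g b \<partial>measure_pmf (bernoulli_pmf q))"
        using Bd[OF s] by simp
      also have "\<dots> = g True * ennreal q + g False * ennreal (1 - q)"
        using q by simp
      finally show ?thesis .
    qed
    have ip: "indep_vars (\<lambda>_. count_space UNIV) Z {Inl s, Inr s}"
      by (rule indep_vars_subset[OF indep[folded Z_def]]) (use s in auto)
    define W where "W = (\<lambda>z. case z of Inl (_::nat) \<Rightarrow> (\<lambda>n::nat. ennreal (real n)) | Inr (_::nat) \<Rightarrow> (\<lambda>y. ennreal (exp (f y))))"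
    have "indep_vars (\<lambda>_. borel) (\<lambda>z w. W z (Z z w)) {Inl s, Inr s}"
      by (rule indep_vars_compose2[OF ip]) simp
    from indep_vars_nn_integral[OF _ this]
    have prodI: "(\<integral>\<^sup>+ w. ennreal (of_bool (Bv s w)) * ennreal (exp (f (Y s w))) \<partial>M)
        = (\<integral>\<^sup>+ w. ennreal (of_bool (Bv s w)) \<partial>M) * (\<integral>\<^sup>+ w. ennreal (exp (f (Y s w))) \<partial>M)"
      by (simp add: W_def Z_def)
    have "(\<integral>\<^sup>+ w. ennreal (exp (of_bool (Bv s w) * f (Y s w))) \<partial>M)
        = (\<integral>\<^sup>+ w. (ennreal (1 - of_bool (Bv s w)) + ennreal (of_bool (Bv s w)) * ennreal (exp (f (Y s w)))) \<partial>M)"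
      by (intro nn_integral_cong) auto
    also have "\<dots> = (\<integral>\<^sup>+ w. ennreal (1 - of_bool (Bv s w)) \<partial>M) + (\<integral>\<^sup>+ w. ennreal (of_bool (Bv s w)) * ennreal (exp (f (Y s w))) \<partial>M)"
      by (intro nn_integral_add) auto
    also have "\<dots> = ennreal (1 - q) + ennreal q * (\<integral>\<^sup>+ w. ennreal (exp (f (Y s w))) \<partial>M)"
      unfolding prodI using B1[of "\<lambda>b. ennreal (1 - of_bool b)"] B1[of "\<lambda>b. ennreal (of_bool b)"] by simp
    also have "\<dots> \<le> ennreal (1 - q) + ennreal q * ennreal m"
      by (intro add_left_mono mult_left_mono Yd s) auto
    also have "\<dots> = ennreal (1 - q + q * m)"
      using q m by (simp add: ennreal_mult ennreal_plus)
    finally show "(\<integral>\<^sup>+ w. ennreal (exp (of_bool (Bv s w) * f (Y s w))) \<partial>M) \<le> ennreal (1 - q + q * m)" .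
  qed
  also have "\<dots> = ennreal ((1 - q + q * m) ^ card T)"
    by (simp only: prod_constant) (rule ennreal_power, use q m in simp)
  finally show ?thesis
    using q m by (simp add: emeasure_eq_measure)
qed
lemma sum_aux1: fixes b y :: "nat \<Rightarrow> real" shows "(\<Sum>s\<in>A. b s * (l * (y s - c))) = l * ((\<Sum>s\<in>A. y s * b s) - c * (\<Sum>s\<in>A. b s))"
  by (simp add: sum_distrib_left sum_subtractf algebra_simps)
lemma sum_aux2: fixes b y :: "nat \<Rightarrow> real" shows "(\<Sum>s\<in>A. b s * (l * (c - y s))) = l * (c * (\<Sum>s\<in>A. b s) - (\<Sum>s\<in>A. y s * b s))"
  by (simp add: sum_distrib_left sum_subtractf algebra_simps)

lemma binom_mgf:
  assumes p: "p \<in> {0..1}"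
  shows "(\<integral>\<^sup>+y. ennreal (exp (l * real y + c)) \<partial>measure_pmf (binomial_pmf N p))
       = ennreal ((1 - p + p * exp l) ^ N * exp c)"
proof -
  have "(\<integral>\<^sup>+y. ennreal (exp (l * real y + c)) \<partial>measure_pmf (binomial_pmf N p))
      = ennreal (measure_pmf.expectation (binomial_pmf N p) (\<lambda>y. exp (l * real y + c)))"
    by (rule nn_integral_eq_integral) (use p in auto)
  also have "measure_pmf.expectation (binomial_pmf N p) (\<lambda>y. exp (l * real y + c))
      = (\<Sum>k\<le>N. (real (N choose k) * p ^ k * (1 - p) ^ (N - k)) * exp (l * real k + c))"
    by (subst expectation_binomial_pmf'[OF p]) simp
  also have "\<dots> = (\<Sum>k\<le>N. real (N choose k) * (p * exp l) ^ k * (1 - p) ^ (N - k)) * exp c"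
    by (simp add: sum_distrib_right sum_distrib_left exp_add power_mult_distrib exp_of_nat_mult[symmetric] algebra_simps)
  also have "\<dots> = (1 - p + p * exp l) ^ N * exp c"
    using binomial_ring[of "p * exp l" "1 - p" N] by (simp add: algebra_simps)
  finally show ?thesis .
qed

lemma hoeff_bern:
  fixes p l :: real
  assumes "0 \<le> p" "p \<le> 1" "0 \<le> l"
  shows "1 - p + p * exp l \<le> exp (l\<^sup>2 / 8 + l * p)"
proof -
  have pos: "0 < 1 + p * (exp l - 1)"
    using assms by (intro add_pos_nonneg mult_nonneg_nonneg) auto
  have "-l * p + ln (1 + p * (exp l - 1)) \<le> l\<^sup>2 / 8"
    using Hoeffdings_lemma_aux[of l p] assms by simp
  hence "ln (1 + p * (exp l - 1)) \<le> l\<^sup>2 / 8 + l * p" by simp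
  hence "exp (ln (1 + p * (exp l - 1))) \<le> exp (l\<^sup>2 / 8 + l * p)" by (simp only: exp_le_cancel_iff)
  hence "1 + p * (exp l - 1) \<le> exp (l\<^sup>2 / 8 + l * p)" unfolding exp_ln[OF pos] .
  thus ?thesis by (simp add: algebra_simps)
qed

lemma hoeff_bern':
  fixes p l :: real
  assumes "0 \<le> p" "p \<le> 1" "0 \<le> l"
  shows "1 - p + p * exp (-l) \<le> exp (l\<^sup>2 / 8 - l * p)"
proof -
  have "1 - (1 - p) + (1 - p) * exp l \<le> exp (l\<^sup>2 / 8 + l * (1 - p))"
    by (rule hoeff_bern) (use assms in auto)
  hence "exp (-l) * (1 - (1 - p) + (1 - p) * exp l) \<le> exp (-l) * exp (l\<^sup>2 / 8 + l * (1 - p))"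
    by (intro mult_left_mono) auto
  also have "exp (-l) * exp (l\<^sup>2 / 8 + l * (1 - p)) = exp (l\<^sup>2 / 8 - l * p)"
    by (simp add: exp_add[symmetric] algebra_simps)
  also have "exp (-l) * (1 - (1 - p) + (1 - p) * exp l) = 1 - p + p * exp (-l)"
    by (simp add: algebra_simps exp_minus field_simps)
  finally show ?thesis .
qed


lemma (in prob_space) entry_bound:
  fixes Bv :: "nat \<Rightarrow> 'a \<Rightarrow> bool" and Y :: "nat \<Rightarrow> 'a \<Rightarrow> nat" and p q \<eta> :: real
  assumes Bm: "\<And>s. Bv s \<in> measurable M (count_space UNIV)"
    and Ym: "\<And>s. Y s \<in> measurable M (count_space UNIV)"
    and indep: "indep_vars (\<lambda>_. count_space UNIV)
        (\<lambda>z. case z of Inl s \<Rightarrow> (\<lambda>w. of_bool (Bv s w) :: nat) | Inr s \<Rightarrow> Y s) (Inl ` {..<t} \<union> Inr ` {..<t})"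
    and Bd: "\<And>s. s < t \<Longrightarrow> distr M (count_space UNIV) (Bv s) = measure_pmf (bernoulli_pmf q)"
    and Yd: "\<And>s. s < t \<Longrightarrow> distr M (count_space UNIV) (Y s) = measure_pmf (binomial_pmf N p)"
    and p: "0 \<le> p" "p \<le> 1" and q: "0 \<le> q" "q \<le> 1" and eta: "\<eta> > 0" and N: "N \<ge> 1"
  shows "measure M {w\<in>space M. \<eta> < \<bar>(\<Sum>s<t. real (Y s w) * of_bool (Bv s w)) / (real N * (\<Sum>s<t. of_bool (Bv s w))) - p\<bar>}
     \<le> 2 * (1 - q + q * exp (- 2 * real N * \<eta>\<^sup>2)) ^ t"
proof -
  define l where "l = 4 * \<eta>"
  have l: "l > 0" using eta by (simp add: l_def)
  define fu where "fu = (\<lambda>y::nat. l * (real y - real N * (p + \<eta>)))"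
  define fl where "fl = (\<lambda>y::nat. l * (real N * (p - \<eta>) - real y))"
  define m where "m = exp (- 2 * real N * \<eta>\<^sup>2)"
  have fY[measurable]: "(\<lambda>w. g (Y s w)) \<in> borel_measurable M" for s and g :: "nat \<Rightarrow> real"
    by (rule measurable_compose[OF Ym]) simp
  have Bp[measurable]: "Measurable.pred M (Bv s)" for s
    using Bm by (simp add: pred_def)
  have Yint: "(\<integral>\<^sup>+w. ennreal (exp (g (Y s w))) \<partial>M) = (\<integral>\<^sup>+y. ennreal (exp (g y)) \<partial>measure_pmf (binomial_pmf N p))"
    if s: "s < t" for s and g :: "nat \<Rightarrow> real"
  proof -
    have "(\<integral>\<^sup>+w. ennreal (exp (g (Y s w))) \<partial>M) = (\<integral>\<^sup>+y. ennreal (exp (g y)) \<partial>distr M (count_space UNIV) (Y s))"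
      by (rule nn_integral_distr[symmetric]) (use Ym in auto)
    also have "\<dots> = (\<integral>\<^sup>+y. ennreal (exp (g y)) \<partial>measure_pmf (binomial_pmf N p))"
      using Yd[OF s] by simp
    finally show ?thesis .
  qed
  have up: "(\<integral>\<^sup>+w. ennreal (exp (fu (Y s w))) \<partial>M) \<le> ennreal m" if s: "s < t" for s
  proof -
    have "(\<integral>\<^sup>+w. ennreal (exp (fu (Y s w))) \<partial>M) = (\<integral>\<^sup>+y. ennreal (exp (fu y)) \<partial>measure_pmf (binomial_pmf N p))"
      by (rule Yint[OF s])
    also have "\<dots> = (\<integral>\<^sup>+y. ennreal (exp (l * real y + (- l * real N * (p + \<eta>)))) \<partial>measure_pmf (binomial_pmf N p))"
      unfolding fu_def by (simp add: algebra_simps)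
    also have "\<dots> = ennreal ((1 - p + p * exp l) ^ N * exp (- l * real N * (p + \<eta>)))"
      by (rule binom_mgf) (use p in auto)
    also have "\<dots> \<le> ennreal m"
    proof (rule ennreal_leI)
      have "(1 - p + p * exp l) ^ N \<le> exp (l\<^sup>2 / 8 + l * p) ^ N"
        by (rule power_mono[OF hoeff_bern]) (use p l in \<open>auto intro: add_nonneg_nonneg\<close>)
      also have "\<dots> = exp (real N * (l\<^sup>2 / 8 + l * p))" by (simp add: exp_of_nat_mult)
      finally have "(1 - p + p * exp l) ^ N * exp (- l * real N * (p + \<eta>))
          \<le> exp (real N * (l\<^sup>2 / 8 + l * p)) * exp (- l * real N * (p + \<eta>))"
        by (rule mult_right_mono) simp
      also have "\<dots> = m" unfolding m_def exp_add[symmetric] l_def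
        by (simp add: algebra_simps power2_eq_square)
      finally show "(1 - p + p * exp l) ^ N * exp (- l * real N * (p + \<eta>)) \<le> m" .
    qed
    finally show ?thesis .
  qed
  have lo: "(\<integral>\<^sup>+w. ennreal (exp (fl (Y s w))) \<partial>M) \<le> ennreal m" if s: "s < t" for s
  proof -
    have "(\<integral>\<^sup>+w. ennreal (exp (fl (Y s w))) \<partial>M) = (\<integral>\<^sup>+y. ennreal (exp (fl y)) \<partial>measure_pmf (binomial_pmf N p))"
      by (rule Yint[OF s])
    also have "\<dots> = (\<integral>\<^sup>+y. ennreal (exp ((- l) * real y + (l * real N * (p - \<eta>)))) \<partial>measure_pmf (binomial_pmf N p))"
      unfolding fl_def by (simp add: algebra_simps)
    also have "\<dots> = ennreal ((1 - p + p * exp (- l)) ^ N * exp (l * real N * (p - \<eta>)))"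
      by (rule binom_mgf) (use p in auto)
    also have "\<dots> \<le> ennreal m"
    proof (rule ennreal_leI)
      have "(1 - p + p * exp (- l)) ^ N \<le> exp (l\<^sup>2 / 8 - l * p) ^ N"
        by (rule power_mono[OF hoeff_bern']) (use p l in \<open>auto intro: add_nonneg_nonneg\<close>)
      also have "\<dots> = exp (real N * (l\<^sup>2 / 8 - l * p))" by (simp add: exp_of_nat_mult)
      finally have "(1 - p + p * exp (- l)) ^ N * exp (l * real N * (p - \<eta>))
          \<le> exp (real N * (l\<^sup>2 / 8 - l * p)) * exp (l * real N * (p - \<eta>))"
        by (rule mult_right_mono) simp
      also have "\<dots> = m" unfolding m_def exp_add[symmetric] l_def
        by (simp add: algebra_simps power2_eq_square)
      finally show "(1 - p + p * exp (- l)) ^ N * exp (l * real N * (p - \<eta>)) \<le> m" .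
    qed
    finally show ?thesis .
  qed
  have m0: "0 \<le> m" by (simp add: m_def)
  have U1: "measure M {w \<in> space M. 0 \<le> (\<Sum>s\<in>{..<t}. of_bool (Bv s w) * fu (Y s w))} \<le> (1 - q + q * m) ^ card {..<t}"
    by (rule slot_bound[OF _ Bm Ym indep Bd up q m0]) auto
  have U2: "measure M {w \<in> space M. 0 \<le> (\<Sum>s\<in>{..<t}. of_bool (Bv s w) * fl (Y s w))} \<le> (1 - q + q * m) ^ card {..<t}"
    by (rule slot_bound[OF _ Bm Ym indep Bd lo q m0]) auto
  let ?E = "{w\<in>space M. \<eta> < \<bar>(\<Sum>s<t. real (Y s w) * of_bool (Bv s w)) / (real N * (\<Sum>s<t. of_bool (Bv s w))) - p\<bar>}"
  let ?U1 = "{w \<in> space M. 0 \<le> (\<Sum>s\<in>{..<t}. of_bool (Bv s w) * fu (Y s w))}"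
  let ?U2 = "{w \<in> space M. 0 \<le> (\<Sum>s\<in>{..<t}. of_bool (Bv s w) * fl (Y s w))}"
  have sub: "?E \<subseteq> ?U1 \<union> ?U2"
  proof
    fix w assume w: "w \<in> ?E"
    define S where "S = (\<Sum>s<t. real (Y s w) * of_bool (Bv s w))"
    define n where "n = (\<Sum>s<t. of_bool (Bv s w) :: real)"
    have e1: "(\<Sum>s\<in>{..<t}. of_bool (Bv s w) * fu (Y s w)) = l * (S - real N * (p + \<eta>) * n)"
      unfolding S_def n_def fu_def by (rule sum_aux1)
    have e2: "(\<Sum>s\<in>{..<t}. of_bool (Bv s w) * fl (Y s w)) = l * (real N * (p - \<eta>) * n - S)"
      unfolding S_def n_def fl_def by (rule sum_aux2)
    have n0: "n \<ge> 0" unfolding n_def by (simp add: sum_nonneg)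
    have S0: "n = 0 \<Longrightarrow> S = 0" unfolding S_def n_def
      by (simp add: sum_nonneg_eq_0_iff)
    have "\<eta> < \<bar>S / (real N * n) - p\<bar>" using w by (simp add: S_def n_def)
    show "w \<in> ?U1 \<union> ?U2"
    proof (cases "n = 0")
      case True
      then show ?thesis using w S0 e1 by simp
    next
      case False
      hence npos: "real N * n > 0" using n0 N by simp
      have "\<eta> < \<bar>S / (real N * n) - p\<bar>" using w by (simp add: S_def n_def)
      hence "S / (real N * n) > p + \<eta> \<or> S / (real N * n) < p - \<eta>" by linarith
      hence "S > (p + \<eta>) * (real N * n) \<or> S < (p - \<eta>) * (real N * n)"
        using npos by (auto simp only: pos_less_divide_eq pos_divide_less_eq)
      hence "0 \<le> S - real N * (p + \<eta>) * n \<or> 0 \<le> real N * (p - \<eta>) * n - S"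
        by (auto simp: algebra_simps)
      hence "0 \<le> l * (S - real N * (p + \<eta>) * n) \<or> 0 \<le> l * (real N * (p - \<eta>) * n - S)"
        using l by (meson less_imp_le mult_nonneg_nonneg)
      then show ?thesis using w e1 e2 by auto
    qed
  qed
  have "measure M ?E \<le> measure M (?U1 \<union> ?U2)"
    by (rule finite_measure_mono[OF sub]) measurable
  also have "\<dots> \<le> measure M ?U1 + measure M ?U2"
    by (rule measure_Un_le) measurable
  also have "\<dots> \<le> 2 * (1 - q + q * m) ^ t"
    using U1 U2 by simp
  finally show ?thesis unfolding m_def .
qed


lemma det_bound:
  fixes F :: nat and c r kappa eta :: real and P Q :: "nat \<Rightarrow> nat \<Rightarrow> real"
  assumes kap: "kappa > 0" "\<forall>x y A. \<bar>bilin F x A y\<bar> \<le> kappa * l1norm F x * l1norm F y * frob F A"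
    and close: "\<forall>i\<in>{1..F}. \<forall>j\<in>{1..F}. \<bar>Q i j - P i j\<bar> \<le> eta"
    and eta: "eta \<ge> 0"
    and uv: "(u, v) \<in> strat_set F c r"
  shows "\<bar>bilin F u Q v - bilin F u P v\<bar> \<le> kappa * c * r * (real F * eta)"
proof -
  from uv have u: "\<forall>i\<in>{1..F}. 0 \<le> u i \<and> u i \<le> 1" and v: "\<forall>i\<in>{1..F}. 0 \<le> v i \<and> v i \<le> 1"
    and su: "(\<Sum>i\<in>{1..F}. u i) \<le> c" and sv: "(\<Sum>i\<in>{1..F}. v i) \<le> r"
    by (auto simp: strat_set_def)
  have l1u: "l1norm F u \<le> c" using u su unfolding l1norm_def
    by (metis (no_types, lifting) abs_of_nonneg sum.cong)
  have l1v: "l1norm F v \<le> r" using v sv unfolding l1norm_def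
    by (metis (no_types, lifting) abs_of_nonneg sum.cong)
  have l1u0: "0 \<le> l1norm F u" unfolding l1norm_def by (simp add: sum_nonneg)
  have l1v0: "0 \<le> l1norm F v" unfolding l1norm_def by (simp add: sum_nonneg)
  define D where "D = (\<lambda>i j. Q i j - P i j)"
  have diff: "bilin F u Q v - bilin F u P v = bilin F u D v"
    unfolding bilin_def D_def by (simp add: sum_subtractf[symmetric] algebra_simps)
  have "frob F D \<le> sqrt (\<Sum>i\<in>{1..F}. \<Sum>j\<in>{1..F}. eta\<^sup>2)"
    unfolding frob_def
  proof (intro real_sqrt_le_mono sum_mono)
    fix i j assume "i \<in> {1..F}" "j \<in> {1..F}"
    hence "\<bar>D i j\<bar> \<le> eta" using close by (simp add: D_def)
    hence "\<bar>D i j\<bar>\<^sup>2 \<le> eta\<^sup>2" by (intro power_mono) auto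
    thus "(D i j)\<^sup>2 \<le> eta\<^sup>2" by simp
  qed
  also have "\<dots> = real F * eta"
    using eta by (simp add: real_sqrt_mult power2_eq_square)
  finally have fr: "frob F D \<le> real F * eta" .
  have fr0: "0 \<le> frob F D" unfolding frob_def by (simp add: sum_nonneg)
  have "\<bar>bilin F u D v\<bar> \<le> kappa * l1norm F u * l1norm F v * frob F D" using kap by blast
  also have "\<dots> \<le> kappa * c * r * (real F * eta)"
    using kap(1) l1u l1v fr l1u0 l1v0 fr0
    by (intro mult_mono) (auto intro: mult_nonneg_nonneg order_trans)
  finally show ?thesis using diff by simp
qed

theorem theorem2:
  fixes M :: "'w measure"
    and F N t :: nat and c r eps delta kappa :: real
    and P :: "nat \<Rightarrow> nat \<Rightarrow> real"
    and rec :: "nat \<Rightarrow> nat \<Rightarrow> 'w \<Rightarrow> bool"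
    and d :: "nat \<Rightarrow> nat \<Rightarrow> 'w \<Rightarrow> nat"
    and X :: "nat \<Rightarrow> nat \<Rightarrow> nat \<Rightarrow> 'w \<Rightarrow> nat"
    and ustar vstar :: "'w \<Rightarrow> nat \<Rightarrow> real"
    and Ncov :: "((nat \<Rightarrow> real) \<times> (nat \<Rightarrow> real)) set"
  assumes M: "prob_space M"
    and F: "F \<ge> 1" and N: "N \<ge> 1"
    and cr: "c > 0" "r > 0" "r \<le> F"
    and P01: "\<forall>i\<in>{1..F}. \<forall>j\<in>{1..F}. 0 \<le> P i j \<and> P i j \<le> 1"
    and kappa: "kappa > 0"
      "\<forall>x y A. \<bar>bilin F x A y\<bar> \<le> kappa * l1norm F x * l1norm F y * frob F A"
    \<comment> \<open>recommendations: independent Bernoulli(q), q = r/F\<close>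
    and rec_meas: "\<forall>j s. rec j s \<in> measurable M (count_space UNIV)"
    and rec_distr: "\<forall>j\<in>{1..F}. \<forall>s<t.
        distr M (count_space UNIV) (rec j s) = measure_pmf (bernoulli_pmf (r / F))"
    and rec_indep: "prob_space.indep_vars M (\<lambda>_. count_space UNIV) (\<lambda>(j, s). rec j s) ({1..F} \<times> {..<t})"
    \<comment> \<open>requests: on slots where j is recommended, d i s is Binomial(N, P i j),
        independent across such slots and of the recommendation indicators of j\<close>
    and d_meas: "\<forall>i s. d i s \<in> measurable M (count_space UNIV)"
    and X_meas: "\<forall>i j s. X i j s \<in> measurable M (count_space UNIV)"
    and X_distr: "\<forall>i\<in>{1..F}. \<forall>j\<in>{1..F}. \<forall>s<t.
        distr M (count_space UNIV) (X i j s) = measure_pmf (binomial_pmf N (P i j))"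
    and X_indep: "\<forall>i\<in>{1..F}. \<forall>j\<in>{1..F}.
        prob_space.indep_vars M (\<lambda>_. count_space UNIV)
          (\<lambda>z. case z of Inl s \<Rightarrow> (\<lambda>w. of_bool (rec j s w) :: nat) | Inr s \<Rightarrow> X i j s)
          (Inl ` {..<t} \<union> Inr ` {..<t})"
    and d_X: "\<forall>i\<in>{1..F}. \<forall>j\<in>{1..F}. \<forall>s<t. AE w in M. rec j s w \<longrightarrow> d i s w = X i j s w"
    \<comment> \<open>(u*, v*) maximises the estimated hit over the strategy set\<close>
    and opt: "\<forall>w\<in>space M. (ustar w, vstar w) \<in> strat_set F c r \<and>
        (\<forall>(u, v)\<in>strat_set F c r. bilin F u (phat N t d rec w) v
            \<le> bilin F (ustar w) (phat N t d rec w) (vstar w))"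
    and eps: "eps > 0" and delta: "delta > 0"
    and cover: "is_cover F c r eps Ncov"
    and t_large: "real t \<ge> 1 / ((r / F) * (1 - exp (- (N * eps\<^sup>2) / (8 * kappa\<^sup>2 * F\<^sup>2 * c\<^sup>2 * r\<^sup>2))))
        * ln (2 * card Ncov * F\<^sup>2 / delta)"
  shows "\<exists>A\<in>sets M. A \<subseteq> {w\<in>space M. bilin F (ustar w) P (vstar w)
            \<ge> (SUP uv\<in>strat_set F c r. bilin F (fst uv) P (snd uv)) - eps}
          \<and> measure M A \<ge> 1 - delta"
proof -
  interpret prob_space M by (rule M)
  define q where "q = r / real F"
  define \<eta> where "\<eta> = eps / (4 * kappa * real F * c * r)"
  define e where "e = exp (- 2 * real N * \<eta>\<^sup>2)"
  define \<beta> where "\<beta> = 1 - q + q * e"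
  define L where "L = 2 * card Ncov * F\<^sup>2 / delta"
  have Fpos: "real F > 0" using F by simp
  have q: "0 < q" "q \<le> 1" using cr Fpos by (auto simp: q_def field_simps)
  have eta: "\<eta> > 0" using eps kappa cr Fpos by (simp add: \<eta>_def)
  have expo: "- (N * eps\<^sup>2) / (8 * kappa\<^sup>2 * F\<^sup>2 * c\<^sup>2 * r\<^sup>2) = - 2 * real N * \<eta>\<^sup>2"
    unfolding \<eta>_def using kappa cr Fpos by (simp add: field_simps power2_eq_square)
  have e1: "e < 1" unfolding e_def using eta N by simp
  have qe: "q * (1 - e) > 0" using q e1 by simp
  have z: "((\<lambda>_. 0), (\<lambda>_. 0)) \<in> strat_set F c r" using cr by (simp add: strat_set_def)
  have Sne: "strat_set F c r \<noteq> {}" using z by blast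
  have Ncov_ne: "Ncov \<noteq> {}" and Ncov_fin: "finite Ncov"
    using cover z unfolding is_cover_def by fastforce+
  have cardN: "real (card Ncov) \<ge> 1" using Ncov_ne Ncov_fin by (simp add: Suc_leI card_gt_0_iff)
  have L0: "L > 0" unfolding L_def using cardN Fpos delta by simp
  have tl: "real t * (q * (1 - e)) \<ge> ln L"
  proof -
    have "real t \<ge> 1 / (q * (1 - e)) * ln L"
      using t_large unfolding L_def q_def e_def expo by simp
    hence "real t * (q * (1 - e)) \<ge> 1 / (q * (1 - e)) * ln L * (q * (1 - e))"
      using qe by (intro mult_right_mono) auto
    moreover have "1 / (q * (1 - e)) * ln L * (q * (1 - e)) = ln L" using q e1 by simp
    ultimately show ?thesis by simp
  qed
  have beta0: "0 \<le> \<beta>"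
  proof -
    have "0 \<le> q * e" using q by (simp add: e_def)
    thus ?thesis unfolding \<beta>_def using q by simp
  qed
  have beta_le: "\<beta> \<le> exp (- (q * (1 - e)))"
    using exp_ge_add_one_self[of "- (q * (1 - e))"] unfolding \<beta>_def by (simp add: algebra_simps)
  have "\<beta> ^ t \<le> exp (- (q * (1 - e))) ^ t" by (rule power_mono[OF beta_le beta0])
  also have "\<dots> = exp (- (real t * (q * (1 - e))))" by (simp add: exp_of_nat_mult[symmetric])
  also have "\<dots> \<le> exp (- ln L)" using tl by simp
  also have "\<dots> = 1 / L" using L0 by (simp add: exp_minus inverse_eq_divide)
  finally have betat: "\<beta> ^ t \<le> 1 / L" .
  have rm[measurable]: "Measurable.pred M (rec j s)" for j s
    using rec_meas by (simp add: pred_def)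
  have Xm[measurable]: "(\<lambda>w. real (X i j s w)) \<in> borel_measurable M" for i j s
    by (rule measurable_compose[OF X_meas[rule_format]]) simp
  define E where "E = (\<lambda>(i, j). {w\<in>space M. \<eta> < \<bar>(\<Sum>s<t. real (X i j s w) * of_bool (rec j s w))
         / (real N * (\<Sum>s<t. of_bool (rec j s w))) - P i j\<bar>})"
  define I2 where "I2 = {1..F} \<times> {1..F}"
  have Esets: "E ij \<in> sets M" for ij
    unfolding E_def by (cases ij) (simp only: prod.case, measurable)
  have Eb: "measure M (E ij) \<le> 2 * \<beta> ^ t" if ij: "ij \<in> I2" for ij
  proof -
    obtain i j where ijd: "ij = (i, j)" "i \<in> {1..F}" "j \<in> {1..F}" using ij unfolding I2_def by auto
    have "measure M (E ij) \<le> 2 * (1 - q + q * exp (- 2 * real N * \<eta>\<^sup>2)) ^ t"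
      unfolding ijd(1) E_def prod.case
    proof (rule entry_bound)
      show "\<And>s. rec j s \<in> measurable M (count_space UNIV)" using rec_meas by blast
      show "\<And>s. X i j s \<in> measurable M (count_space UNIV)" using X_meas by blast
      show "indep_vars (\<lambda>_. count_space UNIV)
        (\<lambda>z. case z of Inl s \<Rightarrow> (\<lambda>w. of_bool (rec j s w) :: nat) | Inr s \<Rightarrow> X i j s) (Inl ` {..<t} \<union> Inr ` {..<t})"
        using X_indep ijd by blast
      show "\<And>s. s < t \<Longrightarrow> distr M (count_space UNIV) (rec j s) = measure_pmf (bernoulli_pmf q)"
        using rec_distr ijd unfolding q_def by blast
      show "\<And>s. s < t \<Longrightarrow> distr M (count_space UNIV) (X i j s) = measure_pmf (binomial_pmf N (P i j))"
        using X_distr ijd by blast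
    qed (use P01 ijd q eta N in auto)
    thus ?thesis unfolding \<beta>_def e_def .
  qed
  have "AE w in M. \<forall>i\<in>{1..F}. \<forall>j\<in>{1..F}. \<forall>s\<in>{..<t}. rec j s w \<longrightarrow> d i s w = X i j s w"
    using d_X by (intro eventually_ball_finite ballI) auto
  then obtain N0 where N0: "{w\<in>space M. \<not> (\<forall>i\<in>{1..F}. \<forall>j\<in>{1..F}. \<forall>s\<in>{..<t}. rec j s w \<longrightarrow> d i s w = X i j s w)} \<subseteq> N0"
      "emeasure M N0 = 0" "N0 \<in> sets M"
    by (rule AE_E)
  define U where "U = (\<Union>ij\<in>I2. E ij)"
  have Usets: "U \<in> sets M" unfolding U_def I2_def using Esets by auto
  define A where "A = space M - (N0 \<union> U)"
  have Asets: "A \<in> sets M" unfolding A_def using Usets N0(3) by auto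
  have "measure M U \<le> (\<Sum>ij\<in>I2. measure M (E ij))"
    unfolding U_def by (rule measure_UNION_le) (auto simp: I2_def Esets)
  also have "\<dots> \<le> (\<Sum>ij\<in>I2. 2 * \<beta> ^ t)" by (rule sum_mono) (rule Eb)
  also have "\<dots> = real F * real F * (2 * \<beta> ^ t)" by (simp add: I2_def)
  also have "\<dots> \<le> real F * real F * (2 * (1 / L))"
    using betat by (intro mult_left_mono) auto
  also have "\<dots> = delta / real (card Ncov)"
    unfolding L_def using Fpos cardN delta by (simp add: field_simps power2_eq_square)
  also have "\<dots> \<le> delta" using cardN delta by (simp add: divide_le_eq)
  finally have Ub: "measure M U \<le> delta" .
  have "measure M (N0 \<union> U) \<le> measure M N0 + measure M U"
    by (rule measure_Un_le) (use N0 Usets in auto)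
  also have "measure M N0 = 0" using N0(2) by (simp add: measure_def)
  finally have "measure M (N0 \<union> U) \<le> delta" using Ub by simp
  hence Ameas: "measure M A \<ge> 1 - delta"
    unfolding A_def using prob_compl[of "N0 \<union> U"] N0(3) Usets by simp
  have Asub: "A \<subseteq> {w\<in>space M. bilin F (ustar w) P (vstar w)
            \<ge> (SUP uv\<in>strat_set F c r. bilin F (fst uv) P (snd uv)) - eps}"
  proof
    fix w assume wA: "w \<in> A"
    hence w: "w \<in> space M" "w \<notin> N0" "w \<notin> U" unfolding A_def by auto
    have dX: "\<forall>i\<in>{1..F}. \<forall>j\<in>{1..F}. \<forall>s\<in>{..<t}. rec j s w \<longrightarrow> d i s w = X i j s w"
      using N0(1) w by blast
    define Q where "Q = phat N t d rec w"
    have close: "\<forall>i\<in>{1..F}. \<forall>j\<in>{1..F}. \<bar>Q i j - P i j\<bar> \<le> \<eta>"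
    proof (intro ballI)
      fix i j assume i: "i \<in> {1..F}" and j: "j \<in> {1..F}"
      have "w \<notin> E (i, j)" using w i j unfolding U_def I2_def by blast
      hence "\<bar>(\<Sum>s<t. real (X i j s w) * of_bool (rec j s w)) / (real N * (\<Sum>s<t. of_bool (rec j s w))) - P i j\<bar> \<le> \<eta>"
        using w unfolding E_def by auto
      moreover have "(\<Sum>s<t. real (d i s w) * of_bool (rec j s w)) = (\<Sum>s<t. real (X i j s w) * of_bool (rec j s w))"
        by (intro sum.cong refl) (use dX i j in auto)
      ultimately show "\<bar>Q i j - P i j\<bar> \<le> \<eta>" unfolding Q_def phat_def by simp
    qed
    have key: "kappa * c * r * (real F * \<eta>) = eps / 4"
      unfolding \<eta>_def using kappa cr Fpos by (simp add: field_simps)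
    have opt_w: "(ustar w, vstar w) \<in> strat_set F c r"
      and optb: "\<forall>(u, v)\<in>strat_set F c r. bilin F u Q v \<le> bilin F (ustar w) Q (vstar w)"
      using opt w(1) unfolding Q_def by blast+
    have d1: "\<bar>bilin F (ustar w) Q (vstar w) - bilin F (ustar w) P (vstar w)\<bar> \<le> eps / 4"
      using det_bound[OF kappa close _ opt_w] eta key by simp
    have "(SUP uv\<in>strat_set F c r. bilin F (fst uv) P (snd uv)) \<le> bilin F (ustar w) P (vstar w) + eps / 2"
    proof (rule cSUP_least[OF Sne])
      fix uv assume uv: "uv \<in> strat_set F c r"
      obtain u v where uvd: "uv = (u, v)" by fastforce
      have d2: "\<bar>bilin F u Q v - bilin F u P v\<bar> \<le> eps / 4"
        using det_bound[OF kappa close _ uv[unfolded uvd]] eta key by simp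
      have "bilin F u Q v \<le> bilin F (ustar w) Q (vstar w)" using optb uv uvd by auto
      hence "bilin F u P v \<le> bilin F (ustar w) P (vstar w) + eps / 2"
        using d1 d2 by linarith
      thus "bilin F (fst uv) P (snd uv) \<le> bilin F (ustar w) P (vstar w) + eps / 2"
        using uvd by simp
    qed
    thus "w \<in> {w\<in>space M. bilin F (ustar w) P (vstar w)
            \<ge> (SUP uv\<in>strat_set F c r. bilin F (fst uv) P (snd uv)) - eps}"
      using w(1) eps by simp
  qed
  show ?thesis using Asets Asub Ameas by blast
qed

end
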